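(* Let $D$ be an integral domain with quotient field $K$, let $T$ be a flat overring of $D$, and let $f\in K[X]$. Then: (a) $f\in\mathrm{Int}(D)T$ if and only if $(D:_Df(D))T=T$; (b) $f\in\mathrm{Int}(T)$ if and only if $(T:_Tf(D)T)=T$.
   Context: A flat overring of $D$ is a ring $T$ with $D\subseteq T\subseteq K$ that is flat as a $D$-module. $\mathrm{Int}(A)=\{g\in K[X]\mid g(A)\subseteq A\}$. $\mathrm{Int}(D)T$ is the subring of $K[X]$ of finite sums $\sum f_it_i$ ($f_i\in\mathrm{Int}(D)$, $t_i\in T$). $(D:_Df(D))=\{d\in D\mid d\,f(D)\subseteq D\}$; $f(D)T$ is the $T$-submodule of $K$ generated by $f(D)$; $(T:_Tf(D)T)=\{t\in T\mid t\,f(D)T\subseteq T\}$. *)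

theory Defs
  imports "HOL-Computational_Algebra.Polynomial"
begin

text \<open>The quotient field K is modelled as an ambient type 'k of class field;
  subrings of K are subsets of this type.\<close>

definition subring :: "'k::field set \<Rightarrow> bool" where
  "subring S \<longleftrightarrow> 0 \<in> S \<and> 1 \<in> S \<and>
     (\<forall>x\<in>S. \<forall>y\<in>S. x + y \<in> S \<and> x - y \<in> S \<and> x * y \<in> S)"

definition domain_with_quotient_field :: "'k::field set \<Rightarrow> bool" where
  "domain_with_quotient_field D \<longleftrightarrow> subring D \<and>
     (\<forall>x. \<exists>a\<in>D. \<exists>b\<in>D. b \<noteq> 0 \<and> x = a / b)"

definition overring :: "'k::field set \<Rightarrow> 'k set \<Rightarrow> bool" where
  "overring D T \<longleftrightarrow> subring T \<and> D \<subseteq> T"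

text \<open>Flatness of T as a D-module, via the equational criterion of flatness
  (every D-linear relation among elements of T is trivial).\<close>
definition flat_over :: "'k::field set \<Rightarrow> 'k set \<Rightarrow> bool" where
  "flat_over D T \<longleftrightarrow>
     (\<forall>(n::nat) a t. (\<forall>i<n. a i \<in> D \<and> t i \<in> T) \<and> (\<Sum>i<n. a i * t i) = 0 \<longrightarrow>
        (\<exists>(m::nat) b s. (\<forall>j<m. s j \<in> T) \<and> (\<forall>i<n. \<forall>j<m. b i j \<in> D) \<and>
                 (\<forall>i<n. t i = (\<Sum>j<m. b i j * s j)) \<and>
                 (\<forall>j<m. (\<Sum>i<n. a i * b i j) = 0)))"

definition flat_overring :: "'k::field set \<Rightarrow> 'k set \<Rightarrow> bool" where
  "flat_overring D T \<longleftrightarrow> overring D T \<and> flat_over D T"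

definition IntPoly :: "'k::field set \<Rightarrow> 'k poly set" where
  "IntPoly A = {g. \<forall>a\<in>A. poly g a \<in> A}"

definition IntPoly_times :: "'k::field set \<Rightarrow> 'k set \<Rightarrow> 'k poly set" where
  "IntPoly_times D T = {(\<Sum>i<(n::nat). smult (t i) (f i)) | n f t.
       (\<forall>i<n. f i \<in> IntPoly D \<and> t i \<in> T)}"

text \<open>A S: the S-submodule of K generated by A (finite sums of s_i a_i).\<close>
definition gen_mod :: "'k::field set \<Rightarrow> 'k set \<Rightarrow> 'k set" where
  "gen_mod A S = {(\<Sum>i<(n::nat). s i * x i) | n s x. (\<forall>i<n. s i \<in> S \<and> x i \<in> A)}"

definition colon :: "'k::field set \<Rightarrow> 'k set \<Rightarrow> 'k set" where
  "colon R M = {r \<in> R. \<forall>x\<in>M. r * x \<in> R}"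

end

theory Submission
  imports Defs
begin


lemma sr_basic:
  assumes "subring S"
  shows "0 \<in> S" "1 \<in> S" "x \<in> S \<Longrightarrow> y \<in> S \<Longrightarrow> x + y \<in> S"
    "x \<in> S \<Longrightarrow> y \<in> S \<Longrightarrow> x - y \<in> S" "x \<in> S \<Longrightarrow> y \<in> S \<Longrightarrow> x * y \<in> S"
  using assms unfolding subring_def by auto

lemma sr_uminus: "subring S \<Longrightarrow> x \<in> S \<Longrightarrow> - x \<in> S"
  by (metis sr_basic(1) sr_basic(4) diff_0)

lemma sr_power: "subring S \<Longrightarrow> x \<in> S \<Longrightarrow> x ^ n \<in> S"
  by (induction n) (auto intro: sr_basic)

lemma sr_of_nat: "subring S \<Longrightarrow> of_nat n \<in> S"
  by (induction n) (auto intro: sr_basic)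

lemma sr_sum: "subring S \<Longrightarrow> (\<And>i. i \<in> F \<Longrightarrow> g i \<in> S) \<Longrightarrow> sum g F \<in> S"
  by (induction F rule: infinite_finite_induct) (auto intro: sr_basic)

lemma gm_0: "0 \<in> gen_mod A S"
  unfolding gen_mod_def by (rule CollectI, rule exI[of _ 0], auto)

lemma gm_cons:
  assumes "s \<in> S" "a \<in> A" "w \<in> gen_mod A S"
  shows "s * a + w \<in> gen_mod A S"
proof -
  obtain n :: nat and ss x where w: "w = (\<Sum>i<n. ss i * x i)" "\<forall>i<n. ss i \<in> S \<and> x i \<in> A"
    using assms(3) unfolding gen_mod_def by blast
  have "s * a + w = (\<Sum>i<Suc n. (ss(n:=s)) i * (x(n:=a)) i)"
    using w(1) by (simp add: add.commute)
  moreover have "\<forall>i<Suc n. (ss(n:=s)) i \<in> S \<and> (x(n:=a)) i \<in> A"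
    using w(2) assms by (auto simp: less_Suc_eq)
  ultimately show ?thesis unfolding gen_mod_def by blast
qed

lemma gm_induct[consumes 1, case_names zero step]:
  assumes "y \<in> gen_mod A S" "P 0"
    "\<And>s x z. s \<in> S \<Longrightarrow> x \<in> A \<Longrightarrow> P z \<Longrightarrow> P (s * x + z)"
  shows "P y"
proof -
  obtain n :: nat and ss x where w: "y = (\<Sum>i<n. ss i * x i)" "\<forall>i<n. ss i \<in> S \<and> x i \<in> A"
    using assms(1) unfolding gen_mod_def by blast
  have "P (\<Sum>i<m. ss i * x i)" if "m \<le> n" for m
    using that
  proof (induction m)
    case 0 then show ?case using assms(2) by simp
  next
    case (Suc m)
    then have "P (ss m * x m + (\<Sum>i<m. ss i * x i))" using assms(3)[of "ss m" "x m"] w(2) by simp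
    then show ?case by (simp add: add.commute)
  qed
  then show ?thesis using w(1) by simp
qed

lemma gm_add: "x \<in> gen_mod A S \<Longrightarrow> y \<in> gen_mod A S \<Longrightarrow> x + y \<in> gen_mod A S"
proof (induction x rule: gm_induct)
  case zero then show ?case by simp
next
  case (step s a z)
  then show ?case using gm_cons[of s S a A "z + y"] by (simp add: add.assoc)
qed

lemma gm_single: "s \<in> S \<Longrightarrow> a \<in> A \<Longrightarrow> s * a \<in> gen_mod A S"
  using gm_cons[OF _ _ gm_0] by force

lemma gm_mult:
  assumes "subring S" "r \<in> S" "y \<in> gen_mod A S"
  shows "r * y \<in> gen_mod A S"
  using assms(3)
proof (induction y rule: gm_induct)
  case zero then show ?case by (simp add: gm_0)
next
  case (step s a z)
  have "r * (s * a + z) = (r * s) * a + r * z" by (simp add: algebra_simps)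
  then show ?case using gm_cons[of "r*s" S a A "r*z"] step sr_basic(5)[OF assms(1) assms(2)] by simp
qed

lemma gm_sub:
  assumes "subring S" "A \<subseteq> S" "y \<in> gen_mod A S"
  shows "y \<in> S"
  using assms(3)
  by (induction y rule: gm_induct) (use assms in \<open>auto intro: sr_basic\<close>)

lemma gm_mono:
  assumes "A \<subseteq> B" "y \<in> gen_mod A S"
  shows "y \<in> gen_mod B S"
  using assms(2)
  by (induction y rule: gm_induct) (use assms in \<open>auto intro: gm_0 gm_cons\<close>)

lemma gm_sum: "(\<And>i. i \<in> F \<Longrightarrow> g i \<in> gen_mod A S) \<Longrightarrow> sum g F \<in> gen_mod A S"
  by (induction F rule: infinite_finite_induct) (auto intro: gm_0 gm_add)

lemma gm_prod:
  assumes "subring S" "x \<in> gen_mod A S" "y \<in> gen_mod B S"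
    "\<And>a b. a \<in> A \<Longrightarrow> b \<in> B \<Longrightarrow> a * b \<in> C"
  shows "x * y \<in> gen_mod C S"
proof -
  have ay: "a * y \<in> gen_mod C S" if "a \<in> A" for a
    using assms(3)
  proof (induction y rule: gm_induct)
    case zero then show ?case by (simp add: gm_0)
  next
    case (step s b z)
    have "a * (s * b + z) = s * (a * b) + a * z" by (simp add: algebra_simps)
    then show ?case using gm_cons[of s S "a*b" C "a*z"] step assms(4)[OF that] by simp
  qed
  show ?thesis using assms(2)
  proof (induction x rule: gm_induct)
    case zero then show ?case by (simp add: gm_0)
  next
    case (step s a z)
    have "(s * a + z) * y = s * (a * y) + z * y" by (simp add: algebra_simps)
    then show ?case using gm_add gm_mult[OF assms(1) step(1) ay[OF step(2)]] step(3) by simp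
  qed
qed

lemma gm_rad_add:
  assumes "subring S" "a \<in> S" "b \<in> S" "a ^ i \<in> gen_mod A S" "b ^ k \<in> gen_mod A S"
  shows "(a + b) ^ (i + k) \<in> gen_mod A S"
proof -
  have "(a + b) ^ (i + k) = (\<Sum>j\<le>i+k. of_nat ((i+k) choose j) * a ^ j * b ^ (i + k - j))"
    by (rule binomial_ring)
  also have "\<dots> \<in> gen_mod A S"
  proof (rule gm_sum)
    fix j assume "j \<in> {..i+k}"
    show "of_nat ((i+k) choose j) * a ^ j * b ^ (i + k - j) \<in> gen_mod A S"
    proof (cases "i \<le> j")
      case True
      then have "of_nat ((i+k) choose j) * a ^ j * b ^ (i + k - j)
          = (of_nat ((i+k) choose j) * a ^ (j - i) * b ^ (i + k - j)) * a ^ i"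
        by (simp add: power_add[symmetric] algebra_simps)
      then show ?thesis using gm_mult[OF assms(1) _ assms(4)] assms
        by (metis sr_basic(5) sr_of_nat sr_power)
    next
      case False
      then have "of_nat ((i+k) choose j) * a ^ j * b ^ (i + k - j)
          = (of_nat ((i+k) choose j) * a ^ j * b ^ (i - j)) * b ^ k"
        by (simp add: power_add[symmetric] algebra_simps)
      then show ?thesis using gm_mult[OF assms(1) _ assms(5)] assms
        by (metis sr_basic(5) sr_of_nat sr_power)
    qed
  qed
  finally show ?thesis .
qed



lemma flat_colon1:
  assumes dq: "domain_with_quotient_field D" and fo: "flat_overring D T" and tT: "t \<in> T"
  shows "1 \<in> gen_mod {c\<in>D. c * t \<in> D} T"
proof -
  have sD: "subring D" using dq unfolding domain_with_quotient_field_def by simp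
  have fl: "flat_over D T" using fo unfolding flat_overring_def by simp
  obtain a b where ab: "a \<in> D" "b \<in> D" "b \<noteq> 0" "t = a / b"
    using dq unfolding domain_with_quotient_field_def by blast
  define aa where "aa = (\<lambda>i::nat. if i = 0 then a else - b)"
  define tt where "tt = (\<lambda>i::nat. if i = 0 then 1 else t)"
  have h1: "\<forall>i<2. aa i \<in> D \<and> tt i \<in> T"
    using ab sr_uminus[OF sD] tT fo sr_basic(2)[of T]
    unfolding aa_def tt_def flat_overring_def overring_def by (auto simp: less_2_cases_iff)
  have h2: "(\<Sum>i<2. aa i * tt i) = 0"
    using ab by (simp add: aa_def tt_def eval_nat_numeral)
  obtain m :: nat and bb s where
    ms: "\<forall>j<m. s j \<in> T" "\<forall>i<2. \<forall>j<m. bb i j \<in> D"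
      "\<forall>i<2. tt i = (\<Sum>j<m. bb i j * s j)" "\<forall>j<m. (\<Sum>i<2. aa i * bb i j) = 0"
    using fl h1 h2 unfolding flat_over_def by blast
  have one: "1 = (\<Sum>j<m. s j * bb 0 j)"
    using ms(3)[rule_format, of 0] by (simp add: tt_def mult.commute)
  have rel: "bb 0 j * t \<in> D" if "j < m" for j
  proof -
    have "a * bb 0 j - b * bb 1 j = 0"
      using ms(4) that by (simp add: aa_def eval_nat_numeral)
    then have e: "a * bb 0 j = b * bb 1 j" by simp
    have "b * (bb 0 j * t) = a * bb 0 j" using ab by simp
    then have "b * (bb 0 j * t) = b * bb 1 j" using e by simp
    then have "bb 0 j * t = bb 1 j" using ab(3) by simp
    then show ?thesis using ms(2) that by simp
  qed
  show ?thesis unfolding gen_mod_def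
    using one ms(1,2) rel by (intro CollectI exI[of _ m] exI[of _ s] exI[of _ "bb 0"]) auto
qed

lemma intT:
  assumes sD: "subring D" and sT: "subring T" and DT: "D \<subseteq> T"
    and fl: "\<And>t. t \<in> T \<Longrightarrow> 1 \<in> gen_mod {c\<in>D. c * t \<in> D} T"
  shows "degree f \<le> n \<Longrightarrow> poly f ` D \<subseteq> T \<Longrightarrow> x \<in> T \<Longrightarrow> poly f x \<in> T"
proof (induction n arbitrary: f x)
  case 0
  then have "f = [:coeff f 0:]" by (simp add: degree_0_id)
  then have "poly f x = poly f 0" by (metis poly_pCons poly_0 mult_zero_right add_0_right)
  then show ?case using 0 sr_basic(1)[OF sD] by auto
next
  case (Suc n)
  show ?case
  proof (cases "degree f \<le> n")
    case True then show ?thesis using Suc by blast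
  next
    case False
    define N where "N = Suc n"
    define L where "L = {c\<in>D. c * poly f x \<in> T}"
    have pw: "c ^ N * poly f x \<in> T" if c: "c \<in> D" "c * x \<in> D" for c
    proof -
      define h where "h = pcompose f [:0, c:] - smult (c ^ N) f"
      have "degree h \<le> n"
      proof (rule degree_le, intro allI impI)
        fix i assume "n < i"
        show "coeff h i = 0"
        proof (cases "i = N")
          case True then show ?thesis by (simp add: h_def coeff_pcompose_linear)
        next
          case False
          then have "coeff f i = 0" using \<open>n < i\<close> Suc.prems(1) N_def
            by (intro coeff_eq_0) auto
          then show ?thesis by (simp add: h_def coeff_pcompose_linear)
        qed
      qed
      moreover have "poly h ` D \<subseteq> T"
      proof
        fix y assume "y \<in> poly h ` D"
        then obtain d where d: "d \<in> D" "y = poly h d" by blast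
        have "y = poly f (c * d) - c ^ N * poly f d"
          using d by (simp add: h_def poly_pcompose mult.commute)
        moreover have "c * d \<in> D" using c d sr_basic(5)[OF sD] by simp
        then have "poly f (c * d) \<in> T" using Suc.prems(2) by blast
        moreover have "poly f d \<in> T" using Suc.prems(2) d(1) by blast
        moreover have "c ^ N \<in> T" using sr_power[OF sT] c(1) DT by blast
        ultimately show "y \<in> T" using sr_basic(4,5)[OF sT] by simp
      qed
      ultimately have "poly h x \<in> T" using Suc.IH Suc.prems(3) by blast
      moreover have "poly f (c * x) \<in> T" using Suc.prems(2) c by blast
      moreover have "c ^ N * poly f x = poly f (c * x) - poly h x"
        by (simp add: h_def poly_pcompose mult.commute)
      ultimately show ?thesis using sr_basic(4)[OF sT] by simp
    qed
    have rad0: "y \<in> {y\<in>T. \<exists>k. y ^ k \<in> gen_mod L T}" if "y \<in> gen_mod {c\<in>D. c * x \<in> D} T" for y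
      using that
    proof (induction y rule: gm_induct)
      case zero then show ?case using sr_basic(1)[OF sT] gm_0 by (metis mem_Collect_eq power_one_right)
    next
      case (step s c z)
      then obtain k where k: "z ^ k \<in> gen_mod L T" "z \<in> T" by blast
      have cL: "c ^ N \<in> L" using step(2) pw sr_power[OF sD] unfolding L_def by blast
      have "c ^ N \<in> gen_mod L T" using gm_single[OF sr_basic(2)[OF sT] cL] by simp
      then have "s ^ N * c ^ N \<in> gen_mod L T" by (rule gm_mult[OF sT sr_power[OF sT step(1)]])
      then have scN: "(s * c) ^ N \<in> gen_mod L T" by (simp add: power_mult_distrib)
      have sc: "s * c \<in> T" using step(1,2) DT sr_basic(5)[OF sT] by auto
      have "(s * c + z) ^ (N + k) \<in> gen_mod L T"
        by (rule gm_rad_add[OF sT sc k(2) scN k(1)])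
      moreover have "s * c + z \<in> T" using sc k(2) sr_basic(3)[OF sT] by simp
      ultimately show ?case by blast
    qed
    have rad: "1 \<in> {y\<in>T. \<exists>k. y ^ k \<in> gen_mod L T}" using rad0 fl[OF Suc.prems(3)] by blast
    then obtain k where "1 ^ k \<in> gen_mod L T" by blast
    then have oneL: "1 \<in> gen_mod L T" by simp
    have "y * poly f x \<in> T" if "y \<in> gen_mod L T" for y
      using that
    proof (induction y rule: gm_induct)
      case zero then show ?case using sr_basic(1)[OF sT] by simp
    next
      case (step s c z)
      have "(s * c + z) * poly f x = s * (c * poly f x) + z * poly f x" by (simp add: algebra_simps)
      moreover have "c * poly f x \<in> T" using step(2) unfolding L_def by blast
      ultimately show ?case using step(1,3) sr_basic(3,5)[OF sT] by simp
    qed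
    from this[OF oneL] show ?thesis by simp
  qed
qed



lemma gm_one_eq:
  assumes "subring T" "A \<subseteq> T" "1 \<in> gen_mod A T"
  shows "gen_mod A T = T"
proof
  show "gen_mod A T \<subseteq> T" using gm_sub[OF assms(1,2)] by blast
  show "T \<subseteq> gen_mod A T"
  proof
    fix t assume "t \<in> T"
    then show "t \<in> gen_mod A T" using gm_mult[OF assms(1) _ assms(3), of t] by simp
  qed
qed

lemma colon_eq_iff:
  assumes "subring T"
  shows "colon T M = T \<longleftrightarrow> M \<subseteq> T"
proof
  assume "colon T M = T"
  then have "1 \<in> colon T M" using sr_basic(2)[OF assms] by simp
  then show "M \<subseteq> T" unfolding colon_def by auto
next
  assume "M \<subseteq> T"
  then show "colon T M = T" unfolding colon_def using sr_basic(5)[OF assms] by auto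
qed

lemma partA:
  assumes sD: "subring D" and sT: "subring T" and DT: "D \<subseteq> T"
    and fl: "\<And>t. t \<in> T \<Longrightarrow> 1 \<in> gen_mod {c\<in>D. c * t \<in> D} T"
  shows "f \<in> IntPoly_times D T \<longleftrightarrow> gen_mod (colon D (poly f ` D)) T = T"
proof
  assume "f \<in> IntPoly_times D T"
  then obtain n :: nat and g t where ft: "f = (\<Sum>i<n. smult (t i) (g i))"
    "\<forall>i<n. g i \<in> IntPoly D \<and> t i \<in> T"
    unfolding IntPoly_times_def by blast
  have J: "1 \<in> gen_mod {d\<in>D. \<forall>i<m. d * t i \<in> D} T" if "m \<le> n" for m
    using that
  proof (induction m)
    case 0
    have "1 * 1 \<in> gen_mod D T" using gm_single sr_basic(2)[OF sT] sr_basic(2)[OF sD] by blast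
    then show ?case by simp
  next
    case (Suc m)
    have a: "1 \<in> gen_mod {d\<in>D. \<forall>i<m. d * t i \<in> D} T" using Suc by simp
    have b: "1 \<in> gen_mod {c\<in>D. c * t m \<in> D} T" using fl ft(2) Suc.prems by simp
    have "1 * 1 \<in> gen_mod {d\<in>D. \<forall>i<Suc m. d * t i \<in> D} T"
    proof (rule gm_prod[OF sT a b])
      fix x y assume x: "x \<in> {d\<in>D. \<forall>i<m. d * t i \<in> D}" and y: "y \<in> {c\<in>D. c * t m \<in> D}"
      have "x * y \<in> D" using x y sr_basic(5)[OF sD] by simp
      moreover have "x * y * t i \<in> D" if "i < Suc m" for i
      proof (cases "i = m")
        case True
        have "x * (y * t m) \<in> D" using x y sr_basic(5)[OF sD] by simp
        then show ?thesis using True by (simp add: mult.assoc)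
      next
        case False
        then have "i < m" using that by simp
        then have "y * (x * t i) \<in> D" using x y sr_basic(5)[OF sD] by simp
        then show ?thesis by (simp add: mult_ac)
      qed
      ultimately show "x * y \<in> {d\<in>D. \<forall>i<Suc m. d * t i \<in> D}" by simp
    qed
    then show ?case by simp
  qed
  have sub: "{d\<in>D. \<forall>i<n. d * t i \<in> D} \<subseteq> colon D (poly f ` D)"
  proof
    fix d assume d: "d \<in> {d\<in>D. \<forall>i<n. d * t i \<in> D}"
    have "d * poly f a \<in> D" if a: "a \<in> D" for a
    proof -
      have "d * poly f a = (\<Sum>i<n. (d * t i) * poly (g i) a)"
        by (simp add: ft(1) poly_sum sum_distrib_left mult_ac)
      also have "\<dots> \<in> D"
      proof (rule sr_sum[OF sD])
        fix i assume "i \<in> {..<n}"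
        then have "d * t i \<in> D" "poly (g i) a \<in> D" using d ft(2) a unfolding IntPoly_def by auto
        then show "(d * t i) * poly (g i) a \<in> D" using sr_basic(5)[OF sD] by simp
      qed
      finally show ?thesis .
    qed
    then show "d \<in> colon D (poly f ` D)" using d unfolding colon_def by auto
  qed
  have "colon D (poly f ` D) \<subseteq> T" using DT unfolding colon_def by auto
  then show "gen_mod (colon D (poly f ` D)) T = T"
    using gm_one_eq[OF sT] gm_mono[OF sub J[OF order_refl]] by blast
next
  assume "gen_mod (colon D (poly f ` D)) T = T"
  then have "1 \<in> gen_mod (colon D (poly f ` D)) T" using sr_basic(2)[OF sT] by simp
  then obtain n :: nat and s c where sc: "1 = (\<Sum>i<n. s i * c i)"
    "\<forall>i<n. s i \<in> T \<and> c i \<in> colon D (poly f ` D)"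
    unfolding gen_mod_def by blast
  have "f = smult (\<Sum>i<n. s i * c i) f" using sc(1) by simp
  also have "\<dots> = (\<Sum>i<n. smult (s i) (smult (c i) f))"
    by (simp add: smult_sum)
  finally have feq: "f = (\<Sum>i<n. smult (s i) (smult (c i) f))" .
  have "\<forall>i<n. smult (c i) f \<in> IntPoly D \<and> s i \<in> T"
    using sc(2) unfolding IntPoly_def colon_def by auto
  then show "f \<in> IntPoly_times D T"
    unfolding IntPoly_times_def using feq
    by (intro CollectI exI[of _ n] exI[of _ "\<lambda>i. smult (c i) f"] exI[of _ s]) auto
qed


theorem proposition3p4:
  fixes D T :: "'k::field set" and f :: "'k poly"
  assumes "domain_with_quotient_field D"
    and "flat_overring D T"
  shows "(f \<in> IntPoly_times D T \<longleftrightarrow> gen_mod (colon D (poly f ` D)) T = T)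
       \<and> (f \<in> IntPoly T \<longleftrightarrow> colon T (gen_mod (poly f ` D) T) = T)"
proof -
  have sD: "subring D" using assms(1) unfolding domain_with_quotient_field_def by simp
  have sT: "subring T" and DT: "D \<subseteq> T"
    using assms(2) unfolding flat_overring_def overring_def by auto
  have fl: "\<And>t. t \<in> T \<Longrightarrow> 1 \<in> gen_mod {c\<in>D. c * t \<in> D} T"
    using flat_colon1[OF assms] by blast
  have A: "f \<in> IntPoly_times D T \<longleftrightarrow> gen_mod (colon D (poly f ` D)) T = T"
    by (rule partA[OF sD sT DT fl])
  have g1: "gen_mod (poly f ` D) T \<subseteq> T \<longleftrightarrow> poly f ` D \<subseteq> T"
  proof
    assume h: "gen_mod (poly f ` D) T \<subseteq> T"
    show "poly f ` D \<subseteq> T"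
    proof
      fix y assume "y \<in> poly f ` D"
      then have "1 * y \<in> gen_mod (poly f ` D) T" using gm_single sr_basic(2)[OF sT] by blast
      then show "y \<in> T" using h by auto
    qed
  next
    assume "poly f ` D \<subseteq> T"
    then show "gen_mod (poly f ` D) T \<subseteq> T" using gm_sub[OF sT] by blast
  qed
  have g2: "f \<in> IntPoly T \<longleftrightarrow> poly f ` D \<subseteq> T"
  proof
    assume "f \<in> IntPoly T"
    then show "poly f ` D \<subseteq> T" using DT unfolding IntPoly_def by auto
  next
    assume h: "poly f ` D \<subseteq> T"
    show "f \<in> IntPoly T" unfolding IntPoly_def
      using intT[OF sD sT DT fl order_refl h] by blast
  qed
  show ?thesis using A g1 g2 colon_eq_iff[OF sT] by blast
qed

end
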